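(* Let $w:\mathbb{R}^d\to\mathbb{R}_+$ be continuous with $w(0)=0$. Let $Y$ be an $\mathbb{R}^d$-valued random variable with $0\in\mathcal{S}(Y)$ and such that $P(Y\in B(0,\epsilon))>0$ for all $\epsilon>0$. Then for each $\eta>0$ there exists $f\in C_+(\overline{\mathbb{R}^d})$ such that $E f(Y)=1$, $E f(Y)w(Y)<\eta$, $E f(Y)1_{\{|Y|\ge\eta\}}<\eta$, and $E f(Y)Y=0$.
   Context: $\mathcal{S}(Y)$ denotes the relative interior of the convex hull of the support of the law of $Y$. $B(x,r)$ is the closed Euclidean ball of radius $r$ around $x$. $\overline{\mathbb{R}^d}$ is the one-point compactification of $\mathbb{R}^d$, $C(\overline{\mathbb{R}^d})$ the real-valued continuous functions on it, and $C_+(\overline{\mathbb{R}^d})=\{g\in C(\overline{\mathbb{R}^d}):g(x)>0 \text{ for all } x\in\mathbb{R}^d\}$. *)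

theory Defs
  imports "HOL-Probability.Probability"
begin

definition measure_support :: "'a::euclidean_space measure \<Rightarrow> 'a set" where
  "measure_support N = {x. \<forall>e>0. emeasure N (ball x e) > 0}"

definition S_of :: "'w measure \<Rightarrow> ('w \<Rightarrow> 'a::euclidean_space) \<Rightarrow> 'a set" where
  "S_of M Y = rel_interior (convex hull (measure_support (distr M borel Y)))"

text \<open>C_+ of the one-point compactification: continuous functions on R^d that extend
continuously to the point at infinity (i.e. have a finite limit at infinity) and are
strictly positive on R^d.\<close>
definition C_plus :: "('a::euclidean_space \<Rightarrow> real) set" where
  "C_plus = {g. continuous_on UNIV g \<and> (\<exists>L. (g \<longlongrightarrow> L) at_infinity) \<and> (\<forall>x. g x > 0)}"

end

theory Submission imports Defs begin

lemma support_AE: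
  fixes N :: "'a::euclidean_space measure"
  assumes "sets N = sets borel"
  shows "closed (measure_support N)" "AE x in N. x \<in> measure_support N"
proof -
  define F where "F = {ball x e | x e. e > 0 \<and> emeasure N (ball x e) = 0}"
  have eq: "UNIV - measure_support N = \<Union>F"
  proof
    show "UNIV - measure_support N \<subseteq> \<Union>F"
    proof
      fix y assume "y \<in> UNIV - measure_support N"
      then obtain e where "e > 0" "\<not> emeasure N (ball y e) > 0"
        unfolding measure_support_def by blast
      hence "ball y e \<in> F" unfolding F_def by (auto simp: not_less)
      moreover have "y \<in> ball y e" using \<open>e > 0\<close> by simp
      ultimately show "y \<in> \<Union>F" by blast
    qed
    show "\<Union>F \<subseteq> UNIV - measure_support N"
    proof
      fix y assume "y \<in> \<Union>F"
      then obtain x e where y: "y \<in> ball x e" "e > 0" "emeasure N (ball x e) = 0"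
        unfolding F_def by blast
      define e' where "e' = e - dist x y"
      have "e' > 0" using y by (simp add: e'_def)
      have "ball y e' \<subseteq> ball x e" unfolding e'_def
        by (simp add: ball_subset_ball_iff dist_commute)
      hence "emeasure N (ball y e') \<le> emeasure N (ball x e)"
        by (intro emeasure_mono) (auto simp: assms)
      with y have "emeasure N (ball y e') = 0" by simp
      with \<open>e' > 0\<close> show "y \<in> UNIV - measure_support N"
        unfolding measure_support_def by force
    qed
  qed
  have "open (\<Union>F)" unfolding F_def by auto
  with eq show "closed (measure_support N)"
    by (metis closed_def double_complement Compl_eq_Diff_UNIV)
  obtain F' where F': "F' \<subseteq> F" "countable F'" "\<Union>F' = \<Union>F"
    using Lindelof[of F] unfolding F_def by blast
  have "\<Union>F' \<in> null_sets N"
  proof -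
    have "(\<Union>i\<in>F'. i) \<in> null_sets N"
    proof (rule null_sets_UN')
      show "countable F'" by fact
      fix i assume "i \<in> F'"
      then obtain x e where "i = ball x e" "emeasure N (ball x e) = 0"
        using F' unfolding F_def by blast
      then show "i \<in> null_sets N" by (auto simp: null_sets_def assms)
    qed
    thus ?thesis by simp
  qed
  hence "UNIV - measure_support N \<in> null_sets N" using eq F' by simp
  thus "AE x in N. x \<in> measure_support N"
    by (rule AE_I') auto
qed


locale L7 = prob_space M for M :: "'w measure" +
  fixes Y :: "'w \<Rightarrow> 'a::euclidean_space" and w :: "'a \<Rightarrow> real"
  assumes Ymeas[measurable]: "Y \<in> borel_measurable M"
  and wcont: "continuous_on UNIV w" and wnn: "\<And>x. w x \<ge> 0"
  and S0: "0 \<in> S_of M Y"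
begin

abbreviation "N \<equiv> distr M borel Y"
abbreviation "supp \<equiv> measure_support N"

lemma supp_closed: "closed supp" and supp_AE: "AE z in N. z \<in> supp"
  using support_AE[of N] by auto

lemma halfspace_zero:
  assumes A: "AE \<omega> in M. 0 \<le> a \<bullet> Y \<omega>"
  shows "AE \<omega> in M. a \<bullet> Y \<omega> = 0"
proof -
  have hN: "AE z in N. 0 \<le> a \<bullet> z"
    using A by (subst AE_distr_iff) auto
  have sub: "supp \<subseteq> {x. 0 \<le> a \<bullet> x}"
  proof
    fix x assume x: "x \<in> supp"
    show "x \<in> {x. 0 \<le> a \<bullet> x}"
    proof (rule ccontr)
      assume "x \<notin> {x. 0 \<le> a \<bullet> x}"
      hence ax: "a \<bullet> x < 0" by simp
      hence "a \<noteq> 0" by auto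
      define e where "e = - (a \<bullet> x) / norm a"
      have e: "e > 0" using ax \<open>a \<noteq> 0\<close> unfolding e_def by (intro divide_pos_pos) auto
      have "a \<bullet> z < 0" if "z \<in> ball x e" for z
      proof -
        have "a \<bullet> (z - x) \<le> norm a * norm (z - x)"
          by (metis Cauchy_Schwarz_ineq2 abs_le_D1)
        also have "norm (z - x) < e" using that by (simp add: dist_norm norm_minus_commute)
        hence "norm a * norm (z - x) < norm a * e" using \<open>a \<noteq> 0\<close> by simp
        also have "norm a * e = - (a \<bullet> x)" using \<open>a \<noteq> 0\<close> by (simp add: e_def)
        finally show ?thesis by (simp add: inner_diff_right)
      qed
      hence "AE z in N. z \<notin> ball x e" using hN by (auto elim!: eventually_mono dest: leD)
      hence "emeasure N (ball x e) = 0"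
        by (subst (asm) AE_iff_measurable[OF _ refl]) (auto simp: ball_def)
      with x e show False unfolding measure_support_def by force
    qed
  qed
  have zero: "a \<bullet> y = 0" if y: "y \<in> supp" for y
  proof (rule ccontr)
    assume "a \<bullet> y \<noteq> 0"
    with sub y have ay: "a \<bullet> y > 0" by force
    hence "y \<noteq> 0" by auto
    define H where "H = convex hull supp"
    have HH: "H \<subseteq> {x. 0 \<le> a \<bullet> x}" unfolding H_def
      by (rule hull_minimal[OF sub]) (simp add: convex_halfspace_ge)
    have "0 \<in> rel_interior H" using S0 by (simp add: S_of_def H_def)
    then obtain e where e: "e > 0" "cball 0 e \<inter> affine hull H \<subseteq> H" "0 \<in> H"
      by (auto simp: mem_rel_interior_cball)
    define t where "t = e / norm y"
    have t: "t > 0" using e \<open>y \<noteq> 0\<close> by (simp add: t_def)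
    define z where "z = (- t) *\<^sub>R y"
    have "norm z = e" using t e \<open>y \<noteq> 0\<close> by (simp add: z_def t_def)
    hence "z \<in> cball 0 e" by simp
    moreover have "z \<in> affine hull H"
    proof -
      have "y \<in> affine hull H" "0 \<in> affine hull H"
        using y e(3) hull_subset[of H affine] hull_subset[of supp convex]
        unfolding H_def by auto
      hence "(1 - (-t)) *\<^sub>R 0 + (-t) *\<^sub>R y \<in> affine hull H"
        using affine_affine_hull[of H] unfolding affine_alt by blast
      thus ?thesis by (simp add: z_def)
    qed
    ultimately have "z \<in> H" using e by blast
    hence "0 \<le> a \<bullet> z" using HH by auto
    moreover have "a \<bullet> z < 0" using t ay by (simp add: z_def)
    ultimately show False by simp
  qed
  have "AE z in N. a \<bullet> z = 0" using supp_AE by (auto elim!: eventually_mono simp: zero)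
  thus ?thesis by (subst (asm) AE_distr_iff) auto
qed


definition G where
  "G = {g. continuous_on UNIV g \<and> (\<forall>x. 0 \<le> g x) \<and> (\<exists>B. \<forall>x. g x * ((1 + norm x) * (1 + w x)) \<le> B)}"
definition mm where "mm g = (\<integral>\<omega>. g (Y \<omega>) *\<^sub>R Y \<omega> \<partial>M)"
definition ms where "ms g = (\<integral>\<omega>. g (Y \<omega>) \<partial>M)"
definition mw where "mw g = (\<integral>\<omega>. g (Y \<omega>) * w (Y \<omega>) \<partial>M)"

lemma w_meas[measurable]: "w \<in> borel_measurable borel"
  using wcont by (intro borel_measurable_continuous_onI) auto

lemma G_meas[measurable]: "g \<in> G \<Longrightarrow> g \<in> borel_measurable borel"
  unfolding G_def by (intro borel_measurable_continuous_onI) auto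

lemma G_nonneg: "g \<in> G \<Longrightarrow> 0 \<le> g x" unfolding G_def by auto

lemma G_bound:
  assumes "g \<in> G"
  obtains B where "\<And>x. g x \<le> B" "\<And>x. g x * norm x \<le> B" "\<And>x. g x * w x \<le> B"
    "\<And>x. g x * (1 + norm x) \<le> B" "0 \<le> B"
proof -
  obtain B where B: "\<And>x. g x * ((1 + norm x) * (1 + w x)) \<le> B" and g0: "\<And>x. 0 \<le> g x"
    using assms unfolding G_def by auto
  have le: "g x * c \<le> B" if "0 \<le> c" "c \<le> (1 + norm x) * (1 + w x)" for x c
  proof -
    have "g x * c \<le> g x * ((1 + norm x) * (1 + w x))"
      using that g0 by (intro mult_left_mono) auto
    thus ?thesis using B[of x] by linarith
  qed
  have wx: "0 \<le> w x" for x using wnn by auto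
  have a1: "1 \<le> (1 + norm x) * (1 + w x)" for x
    using mult_nonneg_nonneg[OF norm_ge_zero wx[of x], of x] wx[of x] by (simp add: algebra_simps)
  have a2: "norm x \<le> (1 + norm x) * (1 + w x)" for x
    using mult_nonneg_nonneg[OF norm_ge_zero wx[of x], of x] wx[of x] by (simp add: algebra_simps)
  have a3: "w x \<le> (1 + norm x) * (1 + w x)" for x
    using mult_nonneg_nonneg[OF norm_ge_zero wx[of x], of x] wx[of x] by (simp add: algebra_simps)
  have a4: "1 + norm x \<le> (1 + norm x) * (1 + w x)" for x
    using mult_nonneg_nonneg[OF norm_ge_zero wx[of x], of x] wx[of x] by (simp add: algebra_simps)
  show ?thesis
  proof (rule that)
    show "g x \<le> B" for x using le[of 1 x] a1[of x] by simp
    show "g x * norm x \<le> B" for x using le[of "norm x" x] a2[of x] by simp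
    show "g x * w x \<le> B" for x using le[of "w x" x] a3[of x] wx[of x] by simp
    show "g x * (1 + norm x) \<le> B" for x using le[of "1 + norm x" x] a4[of x] by simp
    show "0 \<le> B" using le[of 1 0] a1[of 0] g0[of 0] by simp
  qed
qed

lemma G_int:
  assumes "g \<in> G"
  shows "integrable M (\<lambda>\<omega>. g (Y \<omega>))" "integrable M (\<lambda>\<omega>. g (Y \<omega>) *\<^sub>R Y \<omega>)"
    "integrable M (\<lambda>\<omega>. g (Y \<omega>) * w (Y \<omega>))"
proof -
  obtain B where B: "\<And>x. g x \<le> B" "\<And>x. g x * norm x \<le> B" "\<And>x. g x * w x \<le> B"
    using G_bound[OF assms] by metis
  have g0: "\<And>x. 0 \<le> g x" using G_nonneg[OF assms] .
  show "integrable M (\<lambda>\<omega>. g (Y \<omega>))"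
    by (rule integrable_const_bound[where B=B]) (use B g0 assms in auto)
  show "integrable M (\<lambda>\<omega>. g (Y \<omega>) *\<^sub>R Y \<omega>)"
    by (rule integrable_const_bound[where B=B]) (use B g0 assms in auto)
  show "integrable M (\<lambda>\<omega>. g (Y \<omega>) * w (Y \<omega>))"
    by (rule integrable_const_bound[where B=B]) (use B g0 wnn assms in \<open>auto simp: abs_mult\<close>)
qed

lemma G_tendsto:
  assumes "g \<in> G" shows "(g \<longlongrightarrow> 0) at_infinity"
proof -
  obtain B where B: "\<And>x. g x * (1 + norm x) \<le> B" "0 \<le> B"
    using G_bound[OF assms] by metis
  have g0: "\<And>x. 0 \<le> g x" using G_nonneg[OF assms] .
  show ?thesis
  proof (rule tendstoI)
    fix e :: real assume e: "e > 0"
    show "\<forall>\<^sub>F x in at_infinity. dist (g x) 0 < e"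
      unfolding eventually_at_infinity
    proof (intro exI allI impI)
      fix x :: 'a assume x: "B / e \<le> norm x"
      hence "B \<le> e * norm x" using e by (simp add: field_simps)
      hence "B < e * (1 + norm x)" using e by (simp add: algebra_simps)
      hence "g x * (1 + norm x) < e * (1 + norm x)" using B(1)[of x] by linarith
      hence "g x < e" by (rule mult_right_less_imp_less) simp
      thus "dist (g x) 0 < e" using g0[of x] by simp
    qed
  qed
qed

lemma G_add: "g \<in> G \<Longrightarrow> h \<in> G \<Longrightarrow> (\<lambda>x. g x + h x) \<in> G"
  unfolding G_def
proof (safe)
  fix B1 B2 assume *: "continuous_on UNIV g" "continuous_on UNIV h" "\<forall>x. 0 \<le> g x" "\<forall>x. 0 \<le> h x"
    "\<forall>x. g x * ((1 + norm x) * (1 + w x)) \<le> B1" "\<forall>x. h x * ((1 + norm x) * (1 + w x)) \<le> B2"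
  show "continuous_on UNIV (\<lambda>x. g x + h x)" using * by (intro continuous_intros)
  show "0 \<le> g x + h x" for x using * by (simp add: add_nonneg_nonneg)
  show "\<exists>B. \<forall>x. (g x + h x) * ((1 + norm x) * (1 + w x)) \<le> B"
    using * by (intro exI[of _ "B1 + B2"]) (simp add: distrib_right add_mono)
qed

lemma G_scale: "g \<in> G \<Longrightarrow> 0 \<le> c \<Longrightarrow> (\<lambda>x. c * g x) \<in> G"
  unfolding G_def
proof (safe)
  fix B assume *: "continuous_on UNIV g" "\<forall>x. 0 \<le> g x" "0 \<le> c"
    "\<forall>x. g x * ((1 + norm x) * (1 + w x)) \<le> B"
  show "continuous_on UNIV (\<lambda>x. c * g x)" using * by (intro continuous_intros)
  show "0 \<le> c * g x" for x using * by simp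
  show "\<exists>B. \<forall>x. (c * g x) * ((1 + norm x) * (1 + w x)) \<le> B"
    using * by (intro exI[of _ "c * B"]) (simp add: mult.assoc mult_left_mono)
qed

lemma G_zero: "(\<lambda>x. 0) \<in> G" unfolding G_def by auto

lemma G_sum: "finite I \<Longrightarrow> (\<And>i. i \<in> I \<Longrightarrow> f i \<in> G) \<Longrightarrow> (\<lambda>x. \<Sum>i\<in>I. f i x) \<in> G"
proof (induction I rule: finite_induct)
  case empty then show ?case using G_zero by simp
next
  case (insert i I)
  then show ?case using G_add[of "f i" "\<lambda>x. \<Sum>i\<in>I. f i x"] by simp
qed

lemma lin_add:
  assumes "g \<in> G" "h \<in> G"
  shows "mm (\<lambda>x. g x + h x) = mm g + mm h" "ms (\<lambda>x. g x + h x) = ms g + ms h"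
    "mw (\<lambda>x. g x + h x) = mw g + mw h"
  using G_int[OF assms(1)] G_int[OF assms(2)]
  by (simp_all add: mm_def ms_def mw_def scaleR_add_left distrib_right)

lemma lin_scale:
  shows "mm (\<lambda>x. c * g x) = c *\<^sub>R mm g" "ms (\<lambda>x. c * g x) = c * ms g"
    "mw (\<lambda>x. c * g x) = c * mw g"
proof -
  show "mm (\<lambda>x. c * g x) = c *\<^sub>R mm g" unfolding mm_def
    by (simp only: scaleR_scaleR[symmetric] integral_scaleR_right)
  show "ms (\<lambda>x. c * g x) = c * ms g" "mw (\<lambda>x. c * g x) = c * mw g"
    by (simp_all add: ms_def mw_def mult.assoc)
qed

lemma lin_sum_all:
  "finite I \<Longrightarrow> (\<And>i. i \<in> I \<Longrightarrow> f i \<in> G) \<Longrightarrow>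
    mm (\<lambda>x. \<Sum>i\<in>I. f i x) = (\<Sum>i\<in>I. mm (f i)) \<and>
    ms (\<lambda>x. \<Sum>i\<in>I. f i x) = (\<Sum>i\<in>I. ms (f i)) \<and>
    mw (\<lambda>x. \<Sum>i\<in>I. f i x) = (\<Sum>i\<in>I. mw (f i))"
proof (induction I rule: finite_induct)
  case empty
  then show ?case by (simp add: mm_def ms_def mw_def)
next
  case (insert i I)
  have s: "(\<lambda>x. \<Sum>i\<in>I. f i x) \<in> G" using G_sum insert by auto
  have fi: "f i \<in> G" using insert by auto
  show ?case using insert lin_add[OF fi s] by simp
qed

lemma lin_sum:
  assumes "finite I" "\<And>i. i \<in> I \<Longrightarrow> f i \<in> G"
  shows "mm (\<lambda>x. \<Sum>i\<in>I. f i x) = (\<Sum>i\<in>I. mm (f i))"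
    "ms (\<lambda>x. \<Sum>i\<in>I. f i x) = (\<Sum>i\<in>I. ms (f i))"
    "mw (\<lambda>x. \<Sum>i\<in>I. f i x) = (\<Sum>i\<in>I. mw (f i))"
  using lin_sum_all[OF assms] by auto

lemma inner_mm:
  assumes "g \<in> G" shows "a \<bullet> mm g = (\<integral>\<omega>. g (Y \<omega>) * (a \<bullet> Y \<omega>) \<partial>M)"
proof -
  have "(\<integral>\<omega>. g (Y \<omega>) * (a \<bullet> Y \<omega>) \<partial>M) = (\<integral>\<omega>. a \<bullet> (g (Y \<omega>) *\<^sub>R Y \<omega>) \<partial>M)" by simp
  also have "\<dots> = a \<bullet> mm g" unfolding mm_def
    by (rule integral_inner_right) (use G_int(2)[OF assms] in auto)
  finally show ?thesis by simp
qed

lemma ms_nonneg: "g \<in> G \<Longrightarrow> 0 \<le> ms g"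
  unfolding ms_def by (rule integral_nonneg_AE) (auto simp: G_nonneg)

lemma mw_nonneg: "g \<in> G \<Longrightarrow> 0 \<le> mw g"
  unfolding mw_def by (rule integral_nonneg_AE) (auto simp: G_nonneg wnn)


lemma nonneg_dir:
  assumes H: "\<And>h. h \<in> G \<Longrightarrow> 0 \<le> a \<bullet> mm h"
  shows "AE \<omega> in M. 0 \<le> a \<bullet> Y \<omega>"
proof -
  define D where "D x = (1 + norm x)^2 * (1 + w x)" for x
  have Dpos: "D x > 0" for x
  proof -
    have "1 + norm x > 0" "1 + w x > 0" using wnn[of x] by (auto simp: add_pos_nonneg)
    thus ?thesis unfolding D_def by (intro mult_pos_pos) auto
  qed
  define q where "q x = max 0 (-(a \<bullet> x)) / D x" for x
  have q0: "0 \<le> q x" for x using Dpos[of x] by (simp add: q_def)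
  have "q \<in> G" unfolding G_def
  proof (intro CollectI conjI allI exI)
    show "continuous_on UNIV q"
    proof -
      have "\<And>x. 1 + norm x \<noteq> 0" "\<And>x. 1 + w x \<noteq> 0" using wnn
        by (metis add_pos_nonneg less_numeral_extra(1) norm_ge_zero order_less_irrefl)+
      thus ?thesis using wcont unfolding q_def D_def by (intro continuous_intros) auto
    qed
    show "0 \<le> q x" for x by (rule q0)
    show "q x * ((1 + norm x) * (1 + w x)) \<le> norm a" for x
    proof -
      have w1: "1 + w x > 0" using wnn[of x] by (simp add: add_pos_nonneg)
      have n1: "1 + norm x > 0" by (simp add: add_pos_nonneg)
      have "q x * ((1 + norm x) * (1 + w x)) = max 0 (-(a \<bullet> x)) / (1 + norm x)"
      proof -
        let ?P = "(1 + norm x) * (1 + w x)"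
        have P: "?P > 0" using w1 n1 by simp
        have e: "D x = (1 + norm x) * ?P" unfolding D_def by (simp add: power2_eq_square)
        have "q x * ?P = max 0 (-(a \<bullet> x)) / ((1 + norm x) * ?P) * ?P" by (simp add: q_def e)
        also have "\<dots> = max 0 (-(a \<bullet> x)) / (1 + norm x)"
          using P n1 w1 by (simp add: divide_simps)
        finally show ?thesis .
      qed
      also have "\<dots> \<le> norm a"
      proof -
        have "-(a \<bullet> x) \<le> norm a * norm x"
          by (metis Cauchy_Schwarz_ineq2 abs_le_D2 inner_commute norm_minus_commute abs_minus_commute abs_ge_minus_self order_trans)
        also have "\<dots> \<le> norm a * (1 + norm x)" by (simp add: mult_left_mono)
        finally have "max 0 (-(a \<bullet> x)) \<le> norm a * (1 + norm x)" by simp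
        thus ?thesis using n1 by (simp add: divide_le_eq)
      qed
      finally show ?thesis .
    qed
  qed
  define r where "r x = (max 0 (-(a \<bullet> x)))^2 / D x" for x
  have qr: "q x * (a \<bullet> x) = - r x" for x
    unfolding q_def r_def by (auto simp: max_def power2_eq_square field_simps)
  have r0: "0 \<le> r x" for x using Dpos[of x] by (simp add: r_def)
  have "integrable M (\<lambda>\<omega>. a \<bullet> (q (Y \<omega>) *\<^sub>R Y \<omega>))"
    using G_int(2)[OF \<open>q \<in> G\<close>] by (rule integrable_inner_right)
  hence "integrable M (\<lambda>\<omega>. - r (Y \<omega>))" using qr by simp
  hence intr: "integrable M (\<lambda>\<omega>. r (Y \<omega>))" by simp
  have "0 \<le> a \<bullet> mm q" using H[OF \<open>q \<in> G\<close>] .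
  also have "a \<bullet> mm q = (\<integral>\<omega>. - r (Y \<omega>) \<partial>M)" using inner_mm[OF \<open>q \<in> G\<close>] qr by simp
  finally have "(\<integral>\<omega>. r (Y \<omega>) \<partial>M) \<le> 0" by simp
  moreover have "0 \<le> (\<integral>\<omega>. r (Y \<omega>) \<partial>M)" by (rule integral_nonneg_AE) (simp add: r0)
  ultimately have "(\<integral>\<omega>. r (Y \<omega>) \<partial>M) = 0" by simp
  hence "AE \<omega> in M. r (Y \<omega>) = 0"
    using integral_nonneg_eq_0_iff_AE[OF intr] r0 by simp
  thus ?thesis
  proof (rule eventually_mono)
    fix \<omega> assume "r (Y \<omega>) = 0"
    hence "max 0 (-(a \<bullet> Y \<omega>)) = 0" using Dpos[of "Y \<omega>"] by (simp add: r_def)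
    thus "0 \<le> a \<bullet> Y \<omega>" by simp
  qed
qed

lemma negK:
  assumes g: "g \<in> G" shows "\<exists>h\<in>G. mm h = - mm g"
proof (rule ccontr)
  assume nh: "\<not> (\<exists>h\<in>G. mm h = - mm g)"
  define S where "S = (\<lambda>h. mm h + mm g) ` G"
  have "convex S" unfolding convex_def S_def
  proof (intro ballI allI impI)
    fix x y u v assume "x \<in> (\<lambda>h. mm h + mm g) ` G" "y \<in> (\<lambda>h. mm h + mm g) ` G"
      and uv: "0 \<le> (u::real)" "0 \<le> v" "u + v = 1"
    then obtain h1 h2 where h: "h1 \<in> G" "h2 \<in> G" "x = mm h1 + mm g" "y = mm h2 + mm g" by auto
    have G1: "(\<lambda>x. u * h1 x) \<in> G" "(\<lambda>x. v * h2 x) \<in> G" using h uv G_scale by auto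
    have "mm (\<lambda>z. u * h1 z + v * h2 z) = u *\<^sub>R mm h1 + v *\<^sub>R mm h2"
      using lin_add(1)[OF G1] lin_scale(1) by simp
    moreover have "u *\<^sub>R x + v *\<^sub>R y = u *\<^sub>R mm h1 + v *\<^sub>R mm h2 + mm g"
      using h uv by (simp add: algebra_simps scaleR_left_distrib[symmetric])
    moreover have "(\<lambda>z. u * h1 z + v * h2 z) \<in> G" using G_add[OF G1] .
    ultimately show "u *\<^sub>R x + v *\<^sub>R y \<in> (\<lambda>h. mm h + mm g) ` G" by force
  qed
  moreover have "S \<noteq> {}" using G_zero by (auto simp: S_def)
  moreover have "0 \<notin> S" using nh unfolding S_def by (force simp: add_eq_0_iff)
  ultimately obtain a where a: "a \<in> span S" "a \<noteq> 0" "\<And>x. x \<in> S \<Longrightarrow> 0 \<le> a \<bullet> x"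
    using separating_hyperplane_set_0_inspan[of S] by blast
  have pos: "0 \<le> a \<bullet> mm h" if h: "h \<in> G" for h
  proof (rule ccontr)
    assume "\<not> 0 \<le> a \<bullet> mm h"
    hence neg: "a \<bullet> mm h < 0" by simp
    define t where "t = (\<bar>a \<bullet> mm g\<bar> + 1) / (-(a \<bullet> mm h))"
    have t: "t > 0" unfolding t_def by (intro divide_pos_pos) (use neg in auto)
    have "(\<lambda>x. t * h x) \<in> G" using G_scale h t by simp
    hence "mm (\<lambda>x. t * h x) + mm g \<in> S" by (auto simp: S_def)
    hence "0 \<le> a \<bullet> (t *\<^sub>R mm h + mm g)" using a(3) lin_scale(1) by simp
    also have "a \<bullet> (t *\<^sub>R mm h + mm g) = t * (a \<bullet> mm h) + a \<bullet> mm g" by (simp add: inner_add_right)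
    also have "t * (a \<bullet> mm h) = - (\<bar>a \<bullet> mm g\<bar> + 1)" using neg by (simp add: t_def)
    finally show False by linarith
  qed
  have "AE \<omega> in M. a \<bullet> Y \<omega> = 0" by (rule halfspace_zero[OF nonneg_dir[OF pos]])
  hence orth: "a \<bullet> mm h = 0" if "h \<in> G" for h
    using inner_mm[OF that] by (auto intro!: integral_eq_zero_AE elim!: eventually_mono)
  have "S \<subseteq> span (mm ` G)" unfolding S_def
    using g by (auto intro!: span_add[OF span_base span_base])
  hence "a \<in> span (mm ` G)" using a(1) by (metis span_mono span_span subsetD)
  hence "orthogonal a a" by (rule orthogonal_to_span) (use orth in \<open>auto simp: orthogonal_def\<close>)
  thus False using a(2) by (simp add: orthogonal_def)
qed


lemma Ksub: "subspace (mm ` G)"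
  unfolding subspace_def
proof (intro conjI ballI allI)
  show "0 \<in> mm ` G" using G_zero by (force simp: mm_def)
  fix x y assume "x \<in> mm ` G" "y \<in> mm ` G"
  then obtain g h where "g \<in> G" "h \<in> G" "x = mm g" "y = mm h" by auto
  hence "(\<lambda>z. g z + h z) \<in> G" "mm (\<lambda>z. g z + h z) = x + y" using G_add lin_add(1) by auto
  thus "x + y \<in> mm ` G" by (intro image_eqI[where x="\<lambda>z. g z + h z"]) auto
next
  fix c :: real and x assume "x \<in> mm ` G"
  then obtain g where g: "g \<in> G" "x = mm g" by auto
  show "c *\<^sub>R x \<in> mm ` G"
  proof (cases "c \<ge> 0")
    case True
    have "(\<lambda>z. c * g z) \<in> G" "mm (\<lambda>z. c * g z) = c *\<^sub>R x" using g G_scale[OF g(1) True] lin_scale(1)[of c g] by auto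
    thus ?thesis by (intro image_eqI[where x="\<lambda>z. c * g z"]) auto
  next
    case False
    obtain h where h: "h \<in> G" "mm h = - mm g" using negK[OF g(1)] by auto
    have "(-c) \<ge> 0" using False by simp
    hence "(\<lambda>z. (-c) * h z) \<in> G" using G_scale h by blast
    moreover have "mm (\<lambda>z. (-c) * h z) = c *\<^sub>R x" using lin_scale(1)[of "-c" h] h g by simp
    ultimately show ?thesis by (intro image_eqI[where x="\<lambda>z. (-c) * h z"]) auto
  qed
qed

lemma quant: "\<exists>C\<ge>0. \<forall>v\<in>mm ` G. \<exists>g\<in>G. mm g = v \<and> ms g + mw g \<le> C * norm v"
proof -
  obtain B where B: "B \<subseteq> mm ` G" "pairwise orthogonal B" "\<And>x. x \<in> B \<Longrightarrow> norm x = 1"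
    "independent B" "span B = mm ` G"
    using orthonormal_basis_subspace[OF Ksub] by metis
  have fin: "finite B" using B(4) independent_imp_finite by blast
  have "\<forall>b\<in>B. \<exists>g. g \<in> G \<and> mm g = b" using B(1) by auto
  then obtain gp where gp: "\<And>b. b \<in> B \<Longrightarrow> gp b \<in> G \<and> mm (gp b) = b" by metis
  have "\<forall>b\<in>B. \<exists>g. g \<in> G \<and> mm g = - b"
  proof
    fix b assume "b \<in> B"
    then obtain h where "h \<in> G" "mm h = - b" using negK[of "gp b"] gp by force
    thus "\<exists>g. g \<in> G \<and> mm g = - b" by blast
  qed
  then obtain gn where gn: "\<And>b. b \<in> B \<Longrightarrow> gn b \<in> G \<and> mm (gn b) = - b" by metis
  define cp where "cp b = ms (gp b) + mw (gp b)" for b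
  define cn where "cn b = ms (gn b) + mw (gn b)" for b
  have cp0: "0 \<le> cp b" if "b \<in> B" for b using gp[OF that] ms_nonneg[of "gp b"] mw_nonneg[of "gp b"] by (simp add: cp_def)
  have cn0: "0 \<le> cn b" if "b \<in> B" for b using gn[OF that] ms_nonneg[of "gn b"] mw_nonneg[of "gn b"] by (simp add: cn_def)
  define C where "C = (\<Sum>b\<in>B. cp b + cn b)"
  have C0: "0 \<le> C" unfolding C_def using cp0 cn0 by (intro sum_nonneg) (simp add: add_nonneg_nonneg)
  have "\<forall>v\<in>mm ` G. \<exists>g\<in>G. mm g = v \<and> ms g + mw g \<le> C * norm v"
  proof
    fix v assume v: "v \<in> mm ` G"
    define \<alpha> where "\<alpha> b = max 0 (v \<bullet> b)" for b
    define \<beta> where "\<beta> b = max 0 (-(v \<bullet> b))" for b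
    have ab: "\<alpha> b \<le> norm v" "\<beta> b \<le> norm v" if "b \<in> B" for b
    proof -
      have "\<bar>v \<bullet> b\<bar> \<le> norm v" using Cauchy_Schwarz_ineq2[of v b] B(3)[OF that] by simp
      thus "\<alpha> b \<le> norm v" "\<beta> b \<le> norm v" by (auto simp: \<alpha>_def \<beta>_def)
    qed
    have a0: "0 \<le> \<alpha> b" "0 \<le> \<beta> b" for b by (auto simp: \<alpha>_def \<beta>_def)
    define fp where "fp b = (\<lambda>x. \<alpha> b * gp b x)" for b
    define fn where "fn b = (\<lambda>x. \<beta> b * gn b x)" for b
    have fpG: "fp b \<in> G" if "b \<in> B" for b unfolding fp_def using G_scale gp[OF that] a0 by blast
    have fnG: "fn b \<in> G" if "b \<in> B" for b unfolding fn_def using G_scale gn[OF that] a0 by blast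
    define g1 where "g1 = (\<lambda>x. \<Sum>b\<in>B. fp b x)"
    define g2 where "g2 = (\<lambda>x. \<Sum>b\<in>B. fn b x)"
    have g1G: "g1 \<in> G" unfolding g1_def using G_sum[OF fin fpG] by simp
    have g2G: "g2 \<in> G" unfolding g2_def using G_sum[OF fin fnG] by simp
    define g where "g = (\<lambda>x. g1 x + g2 x)"
    have gG: "g \<in> G" unfolding g_def using G_add[OF g1G g2G] .
    have mp: "mm (fp b) = \<alpha> b *\<^sub>R b" "ms (fp b) + mw (fp b) = \<alpha> b * cp b" if "b \<in> B" for b
      using gp[OF that] unfolding fp_def lin_scale cp_def by (auto simp: distrib_left)
    have mn: "mm (fn b) = \<beta> b *\<^sub>R (- b)" "ms (fn b) + mw (fn b) = \<beta> b * cn b" if "b \<in> B" for b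
      using gn[OF that] unfolding fn_def lin_scale cn_def by (auto simp: distrib_left)
    have s1: "mm g1 = (\<Sum>b\<in>B. mm (fp b))" "ms g1 = (\<Sum>b\<in>B. ms (fp b))" "mw g1 = (\<Sum>b\<in>B. mw (fp b))"
      unfolding g1_def using lin_sum[OF fin fpG] by auto
    have s2: "mm g2 = (\<Sum>b\<in>B. mm (fn b))" "ms g2 = (\<Sum>b\<in>B. ms (fn b))" "mw g2 = (\<Sum>b\<in>B. mw (fn b))"
      unfolding g2_def using lin_sum[OF fin fnG] by auto
    have s0: "mm g = mm g1 + mm g2" "ms g = ms g1 + ms g2" "mw g = mw g1 + mw g2"
      unfolding g_def using lin_add[OF g1G g2G] by auto
    have "mm g = (\<Sum>b\<in>B. \<alpha> b *\<^sub>R b) + (\<Sum>b\<in>B. \<beta> b *\<^sub>R (- b))"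
      unfolding s0 s1 s2 using mp(1) mn(1) by simp
    also have "\<dots> = (\<Sum>b\<in>B. (v \<bullet> b) *\<^sub>R b)"
    proof -
      have "\<alpha> b *\<^sub>R b + \<beta> b *\<^sub>R (- b) = (v \<bullet> b) *\<^sub>R b" for b
      proof -
        have "\<alpha> b - \<beta> b = v \<bullet> b" by (simp add: \<alpha>_def \<beta>_def max_def)
        hence "(\<alpha> b - \<beta> b) *\<^sub>R b = (v \<bullet> b) *\<^sub>R b" by simp
        thus ?thesis by (simp add: scaleR_diff_left)
      qed
      thus ?thesis by (simp add: sum.distrib[symmetric])
    qed
    also have "\<dots> = v" using orthonormal_basis_expand[OF B(2) B(3)] v B(5) fin by auto
    finally have mmg: "mm g = v" .
    have "ms g + mw g = (\<Sum>b\<in>B. \<alpha> b * cp b) + (\<Sum>b\<in>B. \<beta> b * cn b)"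
    proof -
      have "ms g + mw g = (\<Sum>b\<in>B. ms (fp b) + mw (fp b)) + (\<Sum>b\<in>B. ms (fn b) + mw (fn b))"
        unfolding s0 s1 s2 sum.distrib by simp
      also have "\<dots> = (\<Sum>b\<in>B. \<alpha> b * cp b) + (\<Sum>b\<in>B. \<beta> b * cn b)"
        using mp(2) mn(2) by simp
      finally show ?thesis .
    qed
    also have "\<dots> \<le> (\<Sum>b\<in>B. norm v * cp b) + (\<Sum>b\<in>B. norm v * cn b)"
      using ab cp0 cn0 by (intro add_mono sum_mono mult_right_mono) auto
    also have "\<dots> = norm v * C" unfolding C_def sum_distrib_left distrib_left sum.distrib ..
    also have "\<dots> = C * norm v" by (rule mult.commute)
    finally show "\<exists>g\<in>G. mm g = v \<and> ms g + mw g \<le> C * norm v" using gG mmg by blast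
  qed
  thus ?thesis using C0 by blast
qed


lemma main:
  assumes pos: "\<And>e. e > 0 \<Longrightarrow> measure M {\<omega> \<in> space M. Y \<omega> \<in> cball 0 e} > 0"
    and w0: "w 0 = 0" and eta: "\<eta> > 0"
  shows "\<exists>f \<in> C_plus.
           (\<integral>\<omega>. f (Y \<omega>) \<partial>M) = 1
         \<and> (\<integral>\<^sup>+\<omega>. ennreal (f (Y \<omega>) * w (Y \<omega>)) \<partial>M) < ennreal \<eta>
         \<and> (\<integral>\<omega>. f (Y \<omega>) * indicator {x. norm x \<ge> \<eta>} (Y \<omega>) \<partial>M) < \<eta>
         \<and> integrable M (\<lambda>\<omega>. f (Y \<omega>) *\<^sub>R Y \<omega>)
         \<and> (\<integral>\<omega>. f (Y \<omega>) *\<^sub>R Y \<omega> \<partial>M) = 0"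
proof -
  obtain C where C: "0 \<le> C" "\<And>v. v \<in> mm ` G \<Longrightarrow> \<exists>g\<in>G. mm g = v \<and> ms g + mw g \<le> C * norm v"
    using quant by blast
  define h where "h x = 1 / ((1 + norm x) * (1 + w x))" for x
  have hpos: "h x > 0" for x
    using wnn[of x] by (auto simp: h_def add_pos_nonneg intro!: mult_pos_pos)
  have hG: "h \<in> G" unfolding G_def
  proof (intro CollectI conjI allI exI)
    have "\<And>x. (1 + norm x) * (1 + w x) \<noteq> 0" using wnn
      by (metis add_pos_nonneg less_numeral_extra(1) mult_pos_pos norm_ge_zero order_less_irrefl)
    thus "continuous_on UNIV h" unfolding h_def using wcont by (intro continuous_intros) auto
    show "0 \<le> h x" for x using hpos[of x] by simp
    show "h x * ((1 + norm x) * (1 + w x)) \<le> 1" for x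
      using wnn[of x] by (simp add: h_def add_pos_nonneg)
  qed
  obtain gh where gh: "gh \<in> G" "mm gh = - mm h" using negK[OF hG] by auto
  define h0 where "h0 x = h x + gh x" for x
  have h0G: "h0 \<in> G" unfolding h0_def using G_add[OF hG gh(1)] by simp
  have h0mm: "mm h0 = 0" unfolding h0_def using lin_add(1)[OF hG gh(1)] gh by simp
  have h0pos: "h0 x > 0" for x using hpos[of x] G_nonneg[OF gh(1), of x] by (simp add: h0_def)
  define M0 where "M0 = ms h0"
  define W0 where "W0 = mw h0"
  have M0: "0 \<le> M0" "0 \<le> W0" using ms_nonneg[OF h0G] mw_nonneg[OF h0G] by (auto simp: M0_def W0_def)
  define \<theta> where "\<theta> = \<eta> / 3"
  have th: "\<theta> > 0" using eta by (simp add: \<theta>_def)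
  obtain dw where dw: "dw > 0" "\<And>x. norm x < dw \<Longrightarrow> w x < \<theta>"
  proof -
    from wcont th obtain d where "d > 0" "\<forall>x'. dist x' 0 < d \<longrightarrow> dist (w x') (w 0) < \<theta>"
      unfolding continuous_on_iff by blast
    thus ?thesis using that[of d] w0 wnn by (auto simp: dist_norm)
  qed
  define \<epsilon> where "\<epsilon> = min \<eta> (min (dw / 2) (\<eta> / (3 * (C + 1))))"
  have ep: "\<epsilon> > 0" "\<epsilon> \<le> \<eta>" "\<epsilon> < dw" "\<epsilon> \<le> \<eta> / (3 * (C + 1))"
    using eta dw C by (auto simp: \<epsilon>_def)
  have Cep: "C * \<epsilon> < \<eta> / 3"
  proof -
    have "C * \<epsilon> \<le> C * (\<eta> / (3 * (C + 1)))" using ep C by (intro mult_left_mono) auto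
    also have "\<dots> < \<eta> / 3" using C eta by (simp add: field_simps)
    finally show ?thesis .
  qed
  define b where "b x = max 0 (1 - norm x / \<epsilon>)" for x :: 'a
  have b0: "0 \<le> b x" for x by (simp add: b_def)
  have b1: "b x \<le> 1" for x using ep by (simp add: b_def)
  have bout: "b x = 0" if "\<epsilon> \<le> norm x" for x using that ep by (simp add: b_def)
  have bin: "1/2 \<le> b x" if "norm x \<le> \<epsilon> / 2" for x using that ep by (simp add: b_def field_simps)
  have bsmall: "b x * norm x \<le> \<epsilon> * b x" "b x * w x \<le> \<theta> * b x" for x
  proof -
    have "b x * norm x \<le> \<epsilon> * b x \<and> b x * w x \<le> \<theta> * b x"
    proof (cases "\<epsilon> \<le> norm x")
      case True thus ?thesis using bout by simp
    next
      case False
      hence "w x < \<theta>" using dw ep by auto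
      have "b x * norm x \<le> b x * \<epsilon>" by (rule mult_left_mono) (use False b0[of x] in auto)
      moreover have "b x * w x \<le> b x * \<theta>" by (rule mult_left_mono) (use \<open>w x < \<theta>\<close> b0[of x] in auto)
      ultimately show ?thesis by (simp add: mult.commute)
    qed
    thus "b x * norm x \<le> \<epsilon> * b x" "b x * w x \<le> \<theta> * b x" by auto
  qed
  have bG: "b \<in> G" unfolding G_def
  proof (intro CollectI conjI allI exI)
    show "continuous_on UNIV b" unfolding b_def using ep by (intro continuous_intros) auto
    show "0 \<le> b x" for x by (rule b0)
    show "b x * ((1 + norm x) * (1 + w x)) \<le> (1 + \<epsilon>) * (1 + \<theta>)" for x
    proof (cases "\<epsilon> \<le> norm x")
      case True thus ?thesis using bout[OF True] ep th by simp
    next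
      case False
      hence "w x < \<theta>" using dw ep by auto
      hence "(1 + norm x) * (1 + w x) \<le> (1 + \<epsilon>) * (1 + \<theta>)"
        using False wnn[of x] ep by (intro mult_mono) auto
      moreover have "0 \<le> (1 + norm x) * (1 + w x)" using wnn[of x] by simp
      ultimately have "b x * ((1 + norm x) * (1 + w x)) \<le> 1 * ((1 + \<epsilon>) * (1 + \<theta>))"
        by (intro mult_mono[OF b1[of x]]) auto
      thus ?thesis by simp
    qed
  qed
  define p where "p = ms b"
  have ppos: "p > 0"
  proof -
    define A where "A = {\<omega> \<in> space M. Y \<omega> \<in> cball 0 (\<epsilon>/2)}"
    have Am: "A \<in> sets M"
    proof -
      have "A = Y -` cball 0 (\<epsilon>/2) \<inter> space M" by (auto simp: A_def)
      moreover have "cball 0 (\<epsilon>/2) \<in> sets borel" by (simp add: borel_closed)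
      ultimately show ?thesis using measurable_sets[OF Ymeas] by simp
    qed
    have "0 < measure M A" using pos[of "\<epsilon>/2"] ep by (simp add: A_def)
    also have "measure M A = (\<integral>\<omega>. indicator A \<omega> \<partial>M)" using Am by simp
    also have "\<dots> \<le> (\<integral>\<omega>. 2 * b (Y \<omega>) \<partial>M)"
    proof (rule integral_mono)
      show "integrable M (indicator A :: 'w \<Rightarrow> real)"
        using Am by (intro integrable_real_indicator) (auto simp: less_top[symmetric])
      show "integrable M (\<lambda>\<omega>. 2 * b (Y \<omega>))" using G_int(1)[OF bG] by simp
      fix \<omega> assume "\<omega> \<in> space M"
      thus "indicator A \<omega> \<le> 2 * b (Y \<omega>)" using bin[of "Y \<omega>"] b0[of "Y \<omega>"]
        by (auto simp: A_def indicator_def)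
    qed
    also have "\<dots> = 2 * p" by (simp add: p_def ms_def)
    finally show ?thesis by simp
  qed
  have mmb: "norm (mm b) \<le> \<epsilon> * p"
  proof -
    have "norm (mm b) \<le> (\<integral>\<omega>. norm (b (Y \<omega>) *\<^sub>R Y \<omega>) \<partial>M)"
      unfolding mm_def by (rule integral_norm_bound)
    also have "\<dots> \<le> (\<integral>\<omega>. \<epsilon> * b (Y \<omega>) \<partial>M)"
    proof (rule integral_mono)
      show "integrable M (\<lambda>\<omega>. norm (b (Y \<omega>) *\<^sub>R Y \<omega>))" using G_int(2)[OF bG] by (rule integrable_norm)
      show "integrable M (\<lambda>\<omega>. \<epsilon> * b (Y \<omega>))" using G_int(1)[OF bG] by simp
      fix \<omega> show "norm (b (Y \<omega>) *\<^sub>R Y \<omega>) \<le> \<epsilon> * b (Y \<omega>)" using bsmall(1) b0 by simp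
    qed
    also have "\<dots> = \<epsilon> * p" by (simp add: p_def ms_def)
    finally show ?thesis .
  qed
  have mwb: "mw b \<le> \<theta> * p"
  proof -
    have "mw b \<le> (\<integral>\<omega>. \<theta> * b (Y \<omega>) \<partial>M)" unfolding mw_def
      by (rule integral_mono) (use G_int[OF bG] bsmall(2) in auto)
    also have "\<dots> = \<theta> * p" by (simp add: p_def ms_def)
    finally show ?thesis .
  qed
  obtain gb where "gb \<in> G" "mm gb = - mm b" using negK[OF bG] by auto
  hence "- mm b \<in> mm ` G" by force
  then obtain gc where gc: "gc \<in> G" "mm gc = - mm b" "ms gc + mw gc \<le> C * norm (- mm b)"
    using C(2) by blast
  have gcb: "ms gc + mw gc < \<eta> / 3 * p"
  proof -
    have "ms gc + mw gc \<le> C * (\<epsilon> * p)" using gc(3) mmb C(1) by (simp add: mult_left_mono order_trans)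
    also have "\<dots> = (C * \<epsilon>) * p" by simp
    also have "\<dots> < \<eta> / 3 * p" using Cep ppos by simp
    finally show ?thesis .
  qed
  have gc0: "0 \<le> ms gc" "0 \<le> mw gc" using ms_nonneg[OF gc(1)] mw_nonneg[OF gc(1)] by auto
  define \<delta> where "\<delta> = \<eta> * p / (3 * (M0 + W0 + 1))"
  have dl: "\<delta> > 0" using eta ppos M0 by (simp add: \<delta>_def)
  have dlb: "\<delta> * M0 < \<eta> * p / 3" "\<delta> * W0 < \<eta> * p / 3"
  proof -
    have "\<delta> * (M0 + W0) < \<eta> * p / 3"
      using eta ppos M0 by (simp add: \<delta>_def field_simps)
    thus "\<delta> * M0 < \<eta> * p / 3" "\<delta> * W0 < \<eta> * p / 3" using dl M0
      by (smt (verit) mult_left_mono distrib_left)+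
  qed
  define g1 where "g1 x = b x + gc x" for x
  define g2 where "g2 x = \<delta> * h0 x" for x
  define f0 where "f0 x = g1 x + g2 x" for x
  have g1G: "g1 \<in> G" unfolding g1_def using G_add[OF bG gc(1)] by simp
  have g2G: "g2 \<in> G" unfolding g2_def using G_scale[OF h0G] dl by simp
  have f0G: "f0 \<in> G" unfolding f0_def using G_add[OF g1G g2G] by simp
  have lf0: "mm f0 = mm b + mm gc + \<delta> *\<^sub>R mm h0" "ms f0 = ms b + ms gc + \<delta> * ms h0"
    "mw f0 = mw b + mw gc + \<delta> * mw h0"
    unfolding f0_def lin_add[OF g1G g2G] unfolding g1_def g2_def lin_add[OF bG gc(1)] lin_scale
    by auto
  have f0pos: "f0 x > 0" for x
    using b0[of x] G_nonneg[OF gc(1), of x] mult_pos_pos[OF dl h0pos[of x]] by (simp add: f0_def g1_def g2_def)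
  define T where "T = ms f0"
  have Tp: "p \<le> T" using lf0 gc0 M0 dl by (simp add: T_def M0_def p_def)
  hence Tpos: "T > 0" using ppos by simp
  define c where "c = 1 / T"
  have cpos: "c > 0" using Tpos by (simp add: c_def)
  define f where "f x = c * f0 x" for x
  have fG: "f \<in> G" unfolding f_def using G_scale[OF f0G] cpos by simp
  have lf: "mm f = c *\<^sub>R mm f0" "ms f = c * ms f0" "mw f = c * mw f0"
    unfolding f_def lin_scale by auto
  show ?thesis
  proof (intro bexI conjI)
    show "f \<in> C_plus" unfolding C_plus_def
      using fG G_tendsto[OF fG] f0pos cpos by (auto simp: G_def f_def)
    show "(\<integral>\<omega>. f (Y \<omega>) \<partial>M) = 1" using lf(2) Tpos by (simp add: ms_def[symmetric] T_def c_def)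
    show "integrable M (\<lambda>\<omega>. f (Y \<omega>) *\<^sub>R Y \<omega>)" by (rule G_int(2)[OF fG])
    show "(\<integral>\<omega>. f (Y \<omega>) *\<^sub>R Y \<omega> \<partial>M) = 0"
      using lf(1) lf0(1) gc(2) h0mm by (simp add: mm_def[symmetric])
    show "(\<integral>\<^sup>+\<omega>. ennreal (f (Y \<omega>) * w (Y \<omega>)) \<partial>M) < ennreal \<eta>"
    proof -
      have "(\<integral>\<^sup>+\<omega>. ennreal (f (Y \<omega>) * w (Y \<omega>)) \<partial>M) = ennreal (mw f)"
        unfolding mw_def using G_int(3)[OF fG] G_nonneg[OF fG] wnn
        by (intro nn_integral_eq_integral) auto
      moreover have "mw f < \<eta>"
      proof -
        have num: "mw f0 < \<eta> * p"
          using lf0(3) mwb gcb gc0 dlb by (simp add: W0_def \<theta>_def)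
        have "mw f = mw f0 / T" using lf(3) by (simp add: c_def)
        also have "\<dots> \<le> mw f0 / p"
          using Tp ppos mw_nonneg[OF f0G] by (intro divide_left_mono) auto
        also have "\<dots> < \<eta>" using num ppos by (simp add: divide_less_eq)
        finally show ?thesis .
      qed
      ultimately show ?thesis using mw_nonneg[OF fG] by (simp add: ennreal_less_iff)
    qed
    show "(\<integral>\<omega>. f (Y \<omega>) * indicator {x. norm x \<ge> \<eta>} (Y \<omega>) \<partial>M) < \<eta>"
    proof -
      define gg where "gg x = gc x + \<delta> * h0 x" for x
      have ggG: "gg \<in> G" unfolding gg_def using G_add[OF gc(1) G_scale[OF h0G]] dl by simp
      have sG: "(\<lambda>x. \<delta> * h0 x) \<in> G" using G_scale[OF h0G] dl by simp
      have msgg: "ms gg = ms gc + \<delta> * M0"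
        unfolding gg_def lin_add(2)[OF gc(1) sG] by (simp add: lin_scale M0_def)
      obtain Bf where Bf: "\<And>x. f x \<le> Bf" using G_bound[OF fG] by metis
      have int1: "integrable M (\<lambda>\<omega>. f (Y \<omega>) * indicator {x. norm x \<ge> \<eta>} (Y \<omega>))"
      proof (rule integrable_const_bound[where B=Bf])
        show "AE \<omega> in M. norm (f (Y \<omega>) * indicator {x. norm x \<ge> \<eta>} (Y \<omega>)) \<le> Bf"
          using Bf G_nonneg[OF fG] by (auto simp: indicator_def intro: order_trans[OF _ Bf])
        have "{x::'a. \<eta> \<le> norm x} \<in> sets borel" by (intro borel_closed closed_Collect_le) (auto intro: continuous_intros)
        thus "(\<lambda>\<omega>. f (Y \<omega>) * indicator {x. norm x \<ge> \<eta>} (Y \<omega>)) \<in> borel_measurable M"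
          using G_meas[OF fG] by measurable
      qed
      have "(\<integral>\<omega>. f (Y \<omega>) * indicator {x. norm x \<ge> \<eta>} (Y \<omega>) \<partial>M) \<le> (\<integral>\<omega>. c * gg (Y \<omega>) \<partial>M)"
      proof (rule integral_mono[OF int1])
        show "integrable M (\<lambda>\<omega>. c * gg (Y \<omega>))" using G_int(1)[OF ggG] by simp
        fix \<omega>
        show "f (Y \<omega>) * indicator {x. norm x \<ge> \<eta>} (Y \<omega>) \<le> c * gg (Y \<omega>)"
        proof (cases "\<eta> \<le> norm (Y \<omega>)")
          case True
          hence "b (Y \<omega>) = 0" using bout ep by auto
          thus ?thesis using True by (simp add: f_def f0_def g1_def g2_def gg_def)
        next
          case False
          thus ?thesis using cpos G_nonneg[OF ggG] by simp
        qed
      qed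
      also have "\<dots> = c * (ms gc + \<delta> * M0)" using msgg by (simp add: ms_def)
      also have "\<dots> = (ms gc + \<delta> * M0) / T" by (simp add: c_def)
      also have "\<dots> \<le> (ms gc + \<delta> * M0) / p"
        using Tp ppos gc0 dl M0 by (intro divide_left_mono) auto
      also have "\<dots> < \<eta>"
      proof -
        have "ms gc + \<delta> * M0 < \<eta> * p" using gcb gc0 dlb by simp
        thus ?thesis using ppos by (simp add: divide_less_eq)
      qed
      finally show ?thesis .
    qed
  qed
qed

end

theorem lemma7p1:
  fixes M :: "'w measure" and Y :: "'w \<Rightarrow> 'a::euclidean_space" and w :: "'a \<Rightarrow> real"
  assumes "prob_space M"
    and "Y \<in> borel_measurable M"
    and "continuous_on UNIV w" and "\<And>x. w x \<ge> 0" and "w 0 = 0"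
    and "0 \<in> S_of M Y"
    and "\<And>e. e > 0 \<Longrightarrow> measure M {\<omega> \<in> space M. Y \<omega> \<in> cball 0 e} > 0"
    and "\<eta> > 0"
  shows "\<exists>f \<in> C_plus.
           (\<integral>\<omega>. f (Y \<omega>) \<partial>M) = 1
         \<and> (\<integral>\<^sup>+\<omega>. ennreal (f (Y \<omega>) * w (Y \<omega>)) \<partial>M) < ennreal \<eta>
         \<and> (\<integral>\<omega>. f (Y \<omega>) * indicator {x. norm x \<ge> \<eta>} (Y \<omega>) \<partial>M) < \<eta>
         \<and> integrable M (\<lambda>\<omega>. f (Y \<omega>) *\<^sub>R Y \<omega>)
         \<and> (\<integral>\<omega>. f (Y \<omega>) *\<^sub>R Y \<omega> \<partial>M) = 0"
proof -
  interpret L7 M Y w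
    using assms by (simp add: L7_def L7_axioms_def)
  show ?thesis using main[OF assms(7) assms(5) assms(8)] .
qed

end
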